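(* Let $p$ be a prime, $\theta\in\mathbb F_p^*$, and $B_1,B_2\subset\mathbb F_p$. Then $$\left|\sum_{b_1\in B_1,\,b_2\in B_2}e_p\left(\theta(b_1-b_2)^2\right)\right|\le|B_1|^{1/2}E(B_1,B_1)^{1/8}|B_2|^{1/2}E(B_2,B_2)^{1/8}p^{1/8}.$$
   Context: $e_p(x)=e^{2\pi ix/p}$ for $x\in\mathbb F_p$; $\mathbb F_p^*=\mathbb F_p\setminus\{0\}$. $E(B,B)$ is the number of solutions of $b_1+b_2=b_3+b_4$ with all $b_i\in B$. *)

theory Defs
  imports "HOL-Analysis.Analysis" "HOL-Number_Theory.Number_Theory"
begin

text \<open>Elements of F_p are represented by integers in {0..<p}; e_p(x) = exp(2 pi i x / p),
  which depends only on x mod p.\<close>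
definition ep :: "nat \<Rightarrow> int \<Rightarrow> complex" where
  "ep p x = exp (2 * of_real pi * \<i> * of_int x / of_nat p)"

definition addE :: "nat \<Rightarrow> int set \<Rightarrow> nat" where
  "addE p B = card {(b1, b2, b3, b4). b1 \<in> B \<and> b2 \<in> B \<and> b3 \<in> B \<and> b4 \<in> B \<and>
                     [b1 + b2 = b3 + b4] (mod int p)}"

end

theory Submission
  imports Defs
begin


lemma ep_cis: "ep p k = cis (2 * pi * real_of_int k / real p)"
  unfolding ep_def cis_conv_exp
  by (simp add: field_simps)

lemma ep_norm[simp]: "norm (ep p k) = 1"
  by (simp add: ep_cis)

lemma ep_add: "ep p (a + b) = ep p a * ep p b"
  by (simp add: ep_cis cis_mult add_divide_distrib distrib_left)

lemma ep_cnj: "cnj (ep p a) = ep p (- a)"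
  by (simp add: ep_cis cis_cnj)

lemma ep_period: assumes "p > 0" shows "ep p (a + int p * t) = ep p a"
proof -
  have "ep p (int p * t) = 1"
    using assms by (simp add: ep_cis) (metis Ints_of_int cis_multiple_2pi mult.assoc)
  then show ?thesis by (simp add: ep_add)
qed

lemma ep_mod: assumes "p > 0" shows "ep p (a mod int p) = ep p a"
  using ep_period[OF assms, of "a mod int p" "a div int p"] by simp

lemma ep_cong: assumes "p > 0" "[a = b] (mod int p)" shows "ep p a = ep p b"
  by (metis assms cong_def ep_mod)

lemma ep_eq_1: assumes "p > 0" "ep p k = 1" shows "int p dvd k"
proof -
  have "exp (2 * of_real pi * \<i> * of_int k / of_nat p) = 1" using assms ep_def by simp
  then obtain n :: int where n: "Im (2 * of_real pi * \<i> * of_int k / of_nat p) = of_int (2*n) * pi"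
    by (auto simp: exp_eq_1)
  then have "2 * pi * k / p = 2 * n * pi" by simp
  then have "real_of_int k = real p * n" using assms by (simp add: field_simps)
  then have "k = int p * n" by (metis of_int_eq_iff of_int_mult of_int_of_nat_eq)
  then show ?thesis by simp
qed

lemma ep_pow: "ep p (int u * k) = ep p k ^ u"
proof (induct u)
  case (Suc u)
  have "ep p (int (Suc u) * k) = ep p (k + int u * k)" by (simp add: algebra_simps)
  then show ?case using Suc by (simp add: ep_add)
qed (simp add: ep_def)

lemma ep_orth: assumes "p > 0"
  shows "(\<Sum>u\<in>{0..<int p}. ep p (u * k)) = (if int p dvd k then of_nat p else 0)"
proof -
  have st: "{0..<int p} = int ` {..<p}"
    using image_int_atLeastLessThan[of 0 p] by (simp add: atLeast0LessThan)
  have "(\<Sum>u\<in>{0..<int p}. ep p (u * k)) = (\<Sum>u\<in>{..<p}. ep p (int u * k))"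
    unfolding st by (simp add: sum.reindex)
  also have "\<dots> = (\<Sum>u\<in>{..<p}. ep p k ^ u)"
    by (simp add: ep_pow)
  finally have eq: "(\<Sum>u\<in>{0..<int p}. ep p (u * k)) = (\<Sum>u<p. ep p k ^ u)" .
  have one: "ep p (int p * t) = 1" for t using ep_period[OF assms, of 0 t] by (simp add: ep_def)
  show ?thesis
  proof (cases "int p dvd k")
    case True
    then obtain t where "k = int p * t" by auto
    then have "ep p k = 1" using one by simp
    then show ?thesis using True eq by simp
  next
    case False
    then have ne: "ep p k \<noteq> 1" using ep_eq_1 assms by blast
    have "ep p k ^ p = 1" using one[of k] ep_pow[of p p k] by simp
    then show ?thesis using False eq ne by (simp add: geometric_sum)
  qed
qed



lemma addE_sum:
  assumes "finite B"
  shows "real (addE p B) = (\<Sum>b1\<in>B. \<Sum>b2\<in>B. \<Sum>b3\<in>B. \<Sum>b4\<in>B.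
           of_bool ([b1 + b2 = b3 + b4] (mod int p)))"
proof -
  define P where "P = (\<lambda>(b1::int, b2::int, b3::int, b4::int). [b1 + b2 = b3 + b4] (mod int p))"
  have set: "{(b1, b2, b3, b4). b1 \<in> B \<and> b2 \<in> B \<and> b3 \<in> B \<and> b4 \<in> B \<and>
                     [b1 + b2 = b3 + b4] (mod int p)} = (B \<times> B \<times> B \<times> B) \<inter> {t. P t}"
    by (auto simp: P_def)
  have "(\<Sum>b1\<in>B. \<Sum>b2\<in>B. \<Sum>b3\<in>B. \<Sum>b4\<in>B. of_bool ([b1 + b2 = b3 + b4] (mod int p)) :: real)
      = (\<Sum>t\<in>B \<times> B \<times> B \<times> B. of_bool (P t))"
    by (simp add: sum.cartesian_product P_def, rule sum.cong, auto split: prod.splits)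
  also have "\<dots> = real (card ((B \<times> B \<times> B \<times> B) \<inter> {t. P t}))"
    using assms by simp
  finally show ?thesis unfolding addE_def set by simp
qed

lemma ep4: "ep p (c*x*y) * cnj (ep p (c*x*y')) * cnj (ep p (c*x'*y)) * ep p (c*x'*y')
   = ep p (c*(x-x')*y) * cnj (ep p (c*(x-x')*y'))"
proof -
  have "ep p (c*x*y) * cnj (ep p (c*x*y')) * cnj (ep p (c*x'*y)) * ep p (c*x'*y')
      = ep p (c*x*y + (- (c*x*y')) + (- (c*x'*y)) + c*x'*y')"
    by (simp only: ep_add ep_cnj)
  also have "\<dots> = ep p (c*(x-x')*y + - (c*(x-x')*y'))"
    by (rule arg_cong[where f="ep p"]) (simp add: algebra_simps)
  also have "\<dots> = ep p (c*(x-x')*y) * cnj (ep p (c*(x-x')*y'))"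
    by (simp only: ep_add ep_cnj)
  finally show ?thesis .
qed

lemma ep4b: "ep p (c*u*y1) * ep p (c*u*y2) * cnj (ep p (c*u*y3)) * cnj (ep p (c*u*y4))
   = ep p (u * (c*(y1+y2-y3-y4)))"
proof -
  have "ep p (c*u*y1) * ep p (c*u*y2) * cnj (ep p (c*u*y3)) * cnj (ep p (c*u*y4))
      = ep p (c*u*y1 + c*u*y2 + (- (c*u*y3)) + (- (c*u*y4)))"
    by (simp only: ep_add ep_cnj)
  also have "\<dots> = ep p (u * (c*(y1+y2-y3-y4)))"
    by (rule arg_cong[where f="ep p"]) (simp add: algebra_simps)
  finally show ?thesis .
qed



lemma L_D:
  fixes B1 B2 :: "int set" and g :: "int \<Rightarrow> complex"
  assumes g1: "\<And>y. norm (g y) = 1"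
  shows "(\<Sum>x\<in>B1. norm (\<Sum>y\<in>B2. g y * ep p (c*x*y))^2)
     \<le> (\<Sum>y\<in>B2. \<Sum>y'\<in>B2. norm (\<Sum>x\<in>B1. ep p (c*x*y) * cnj (ep p (c*x*y'))))"
proof -
  define K where "K y y' = (\<Sum>x\<in>B1. ep p (c*x*y) * cnj (ep p (c*x*y')))" for y y'
  have "complex_of_real (\<Sum>x\<in>B1. norm (\<Sum>y\<in>B2. g y * ep p (c*x*y))^2)
      = (\<Sum>x\<in>B1. (\<Sum>y\<in>B2. g y * ep p (c*x*y)) * cnj (\<Sum>y\<in>B2. g y * ep p (c*x*y)))"
    by (simp only: of_real_sum complex_norm_square)
  also have "\<dots> = (\<Sum>x\<in>B1. \<Sum>y\<in>B2. \<Sum>y'\<in>B2. (g y * cnj (g y')) * (ep p (c*x*y) * cnj (ep p (c*x*y'))))"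
    by (simp add: sum_product mult_ac)
  also have "\<dots> = (\<Sum>y\<in>B2. \<Sum>x\<in>B1. \<Sum>y'\<in>B2. (g y * cnj (g y')) * (ep p (c*x*y) * cnj (ep p (c*x*y'))))"
    by (rule sum.swap)
  also have "\<dots> = (\<Sum>y\<in>B2. \<Sum>y'\<in>B2. \<Sum>x\<in>B1. (g y * cnj (g y')) * (ep p (c*x*y) * cnj (ep p (c*x*y'))))"
    by (rule sum.cong[OF refl], rule sum.swap)
  also have "\<dots> = (\<Sum>y\<in>B2. \<Sum>y'\<in>B2. (g y * cnj (g y')) * K y y')"
    by (simp add: K_def sum_distrib_left)
  finally have eq: "complex_of_real (\<Sum>x\<in>B1. norm (\<Sum>y\<in>B2. g y * ep p (c*x*y))^2)
      = (\<Sum>y\<in>B2. \<Sum>y'\<in>B2. (g y * cnj (g y')) * K y y')" .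
  have "(\<Sum>x\<in>B1. norm (\<Sum>y\<in>B2. g y * ep p (c*x*y))^2)
      = norm (complex_of_real (\<Sum>x\<in>B1. norm (\<Sum>y\<in>B2. g y * ep p (c*x*y))^2))"
    using sum_nonneg[of B1 "\<lambda>x. norm (\<Sum>y\<in>B2. g y * ep p (c*x*y))^2"]
    by (simp only: norm_of_real abs_of_nonneg zero_le_power2)
  also have "\<dots> \<le> (\<Sum>y\<in>B2. norm (\<Sum>y'\<in>B2. (g y * cnj (g y')) * K y y'))"
    unfolding eq by (rule norm_sum)
  also have "\<dots> \<le> (\<Sum>y\<in>B2. \<Sum>y'\<in>B2. norm ((g y * cnj (g y')) * K y y'))"
    by (rule sum_mono, rule norm_sum)
  also have "\<dots> = (\<Sum>y\<in>B2. \<Sum>y'\<in>B2. norm (K y y'))"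
    by (simp add: norm_mult g1)
  finally show ?thesis by (simp add: K_def)
qed

lemma L_F:
  fixes B1 B2 :: "int set"
  shows "complex_of_real (\<Sum>y\<in>B2. \<Sum>y'\<in>B2. norm (\<Sum>x\<in>B1. ep p (c*x*y) * cnj (ep p (c*x*y')))^2)
    = (\<Sum>x\<in>B1. \<Sum>x'\<in>B1. complex_of_real (norm (\<Sum>y\<in>B2. ep p (c*(x-x')*y))^2))"
proof -
  have "complex_of_real (\<Sum>y\<in>B2. \<Sum>y'\<in>B2. norm (\<Sum>x\<in>B1. ep p (c*x*y) * cnj (ep p (c*x*y')))^2)
    = (\<Sum>y\<in>B2. \<Sum>y'\<in>B2. (\<Sum>x\<in>B1. ep p (c*x*y) * cnj (ep p (c*x*y'))) * cnj (\<Sum>x'\<in>B1. ep p (c*x'*y) * cnj (ep p (c*x'*y'))))"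
    by (simp only: of_real_sum complex_norm_square)
  also have "\<dots> = (\<Sum>y\<in>B2. \<Sum>y'\<in>B2. \<Sum>x\<in>B1. \<Sum>x'\<in>B1. ep p (c*x*y) * cnj (ep p (c*x*y')) * cnj (ep p (c*x'*y)) * ep p (c*x'*y'))"
    by (simp add: sum_product mult_ac)
  also have "\<dots> = (\<Sum>y\<in>B2. \<Sum>y'\<in>B2. \<Sum>x\<in>B1. \<Sum>x'\<in>B1. ep p (c*(x-x')*y) * cnj (ep p (c*(x-x')*y')))"
    by (simp only: ep4)
  also have "\<dots> = (\<Sum>x\<in>B1. \<Sum>x'\<in>B1. \<Sum>y\<in>B2. \<Sum>y'\<in>B2. ep p (c*(x-x')*y) * cnj (ep p (c*(x-x')*y')))"
  proof -
    have "(\<Sum>y\<in>B2. \<Sum>y'\<in>B2. \<Sum>x\<in>B1. \<Sum>x'\<in>B1. ep p (c*(x-x')*y) * cnj (ep p (c*(x-x')*y')))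
        = (\<Sum>y\<in>B2. \<Sum>x\<in>B1. \<Sum>x'\<in>B1. \<Sum>y'\<in>B2. ep p (c*(x-x')*y) * cnj (ep p (c*(x-x')*y')))"
      apply (rule sum.cong[OF refl])
      apply (rule trans[OF sum.swap])
      apply (rule sum.cong[OF refl])
      apply (rule sum.swap)
      done
    also have "\<dots> = (\<Sum>x\<in>B1. \<Sum>x'\<in>B1. \<Sum>y\<in>B2. \<Sum>y'\<in>B2. ep p (c*(x-x')*y) * cnj (ep p (c*(x-x')*y')))"
      apply (rule trans[OF sum.swap])
      apply (rule sum.cong[OF refl])
      apply (rule sum.swap)
      done
    finally show ?thesis .
  qed
  also have "\<dots> = (\<Sum>x\<in>B1. \<Sum>x'\<in>B1. complex_of_real (norm (\<Sum>y\<in>B2. ep p (c*(x-x')*y))^2))"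
    by (simp only: complex_norm_square cnj_sum sum_product)
  finally show ?thesis .
qed



lemma sum_delta_bool:
  fixes f :: "int \<Rightarrow> real"
  assumes "k \<in> A" "finite A"
  shows "(\<Sum>u\<in>A. of_bool (k = u) * f u) = f k"
proof -
  have "(\<Sum>u\<in>A. of_bool (k = u) * f u) = (\<Sum>u\<in>A. if k = u then f k else 0)"
    by (rule sum.cong) auto
  then show ?thesis using assms by simp
qed

lemma sum_delta_bool2:
  fixes A :: "int set"
  assumes "a \<in> A" "finite A"
  shows "(\<Sum>u\<in>A. of_bool (b = u) * of_bool (a = u)) = (of_bool (a = b) :: real)"
proof -
  have "(\<Sum>u\<in>A. of_bool (b = u) * of_bool (a = u)) = (\<Sum>u\<in>A. if a = u then (of_bool (a = b) :: real) else 0)"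
    by (rule sum.cong) auto
  then show ?thesis using assms by simp
qed

lemma L_G:
  fixes B1 :: "int set" and R :: "int \<Rightarrow> real"
  assumes p: "p > 0" and per: "\<And>u. R (u mod int p) = R u"
  shows "(\<Sum>x\<in>B1. \<Sum>x'\<in>B1. R (x-x'))
    = (\<Sum>u\<in>{0..<int p}. (\<Sum>x\<in>B1. \<Sum>x'\<in>B1. of_bool ((x-x') mod int p = u)) * R u)"
proof -
  have "(\<Sum>u\<in>{0..<int p}. (\<Sum>x\<in>B1. \<Sum>x'\<in>B1. of_bool ((x-x') mod int p = u)) * R u)
     = (\<Sum>u\<in>{0..<int p}. \<Sum>x\<in>B1. \<Sum>x'\<in>B1. of_bool ((x-x') mod int p = u) * R u)"
    by (simp add: sum_distrib_right)
  also have "\<dots> = (\<Sum>x\<in>B1. \<Sum>x'\<in>B1. \<Sum>u\<in>{0..<int p}. of_bool ((x-x') mod int p = u) * R u)"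
    apply (rule trans[OF sum.swap])
    apply (rule sum.cong[OF refl])
    apply (rule sum.swap)
    done
  also have "\<dots> = (\<Sum>x\<in>B1. \<Sum>x'\<in>B1. R ((x-x') mod int p))"
    using p by (intro sum.cong refl sum_delta_bool) auto
  finally show ?thesis using per by simp
qed

lemma L_I:
  fixes B1 :: "int set"
  assumes p: "p > 0"
  shows "(\<Sum>u\<in>{0..<int p}. (\<Sum>x\<in>B1. \<Sum>x'\<in>B1. of_bool ((x-x') mod int p = u))^2)
    = (\<Sum>x1\<in>B1. \<Sum>x2\<in>B1. \<Sum>x3\<in>B1. \<Sum>x4\<in>B1. (of_bool ((x1-x2) mod int p = (x3-x4) mod int p) :: real))"
proof -
  have "(\<Sum>u\<in>{0..<int p}. (\<Sum>x\<in>B1. \<Sum>x'\<in>B1. of_bool ((x-x') mod int p = u))^2)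
     = (\<Sum>u\<in>{0..<int p}. \<Sum>x1\<in>B1. \<Sum>x2\<in>B1. \<Sum>x3\<in>B1. \<Sum>x4\<in>B1.
          of_bool ((x3-x4) mod int p = u) * (of_bool ((x1-x2) mod int p = u) :: real))"
    by (simp add: power2_eq_square sum_product sum_distrib_left sum_distrib_right)
  also have "\<dots> = (\<Sum>x1\<in>B1. \<Sum>x2\<in>B1. \<Sum>x3\<in>B1. \<Sum>x4\<in>B1. \<Sum>u\<in>{0..<int p}.
          of_bool ((x3-x4) mod int p = u) * (of_bool ((x1-x2) mod int p = u) :: real))"
    apply (rule trans[OF sum.swap], rule sum.cong[OF refl])
    apply (rule trans[OF sum.swap], rule sum.cong[OF refl])
    apply (rule trans[OF sum.swap], rule sum.cong[OF refl])
    apply (rule sum.swap)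
    done
  also have "\<dots> = (\<Sum>x1\<in>B1. \<Sum>x2\<in>B1. \<Sum>x3\<in>B1. \<Sum>x4\<in>B1. (of_bool ((x1-x2) mod int p = (x3-x4) mod int p) :: real))"
    using p by (intro sum.cong refl sum_delta_bool2) auto
  finally show ?thesis .
qed

lemma L_I2:
  fixes B1 :: "int set"
  assumes p: "p > 0" and fin: "finite B1"
  shows "(\<Sum>x1\<in>B1. \<Sum>x2\<in>B1. \<Sum>x3\<in>B1. \<Sum>x4\<in>B1. (of_bool ((x1-x2) mod int p = (x3-x4) mod int p) :: real))
     = real (addE p B1)"
proof -
  have c: "((x1-x2) mod int p = (x3-x4) mod int p) = [x1 + x4 = x3 + x2] (mod int p)" for x1 x2 x3 x4 :: int
  proof -
    have "((x1-x2) mod int p = (x3-x4) mod int p) = [x1 - x2 = x3 - x4] (mod int p)" by (simp add: cong_def)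
    also have "\<dots> = (int p dvd (x1 - x2) - (x3 - x4))" by (simp add: cong_iff_dvd_diff)
    also have "\<dots> = (int p dvd (x1 + x4) - (x3 + x2))" by (simp add: algebra_simps)
    also have "\<dots> = [x1 + x4 = x3 + x2] (mod int p)" by (simp add: cong_iff_dvd_diff)
    finally show ?thesis .
  qed
  have "(\<Sum>x1\<in>B1. \<Sum>x2\<in>B1. \<Sum>x3\<in>B1. \<Sum>x4\<in>B1. (of_bool ((x1-x2) mod int p = (x3-x4) mod int p) :: real))
     = (\<Sum>x1\<in>B1. \<Sum>x2\<in>B1. \<Sum>x3\<in>B1. \<Sum>x4\<in>B1. (of_bool ([x1 + x4 = x3 + x2] (mod int p)) :: real))"
    by (simp only: c)
  also have "\<dots> = (\<Sum>x1\<in>B1. \<Sum>x4\<in>B1. \<Sum>x2\<in>B1. \<Sum>x3\<in>B1. (of_bool ([x1 + x4 = x3 + x2] (mod int p)) :: real))"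
    apply (rule sum.cong[OF refl])
    apply (rule trans[OF sum.cong[OF refl sum.swap]])
    apply (rule sum.swap)
    done
  also have "\<dots> = (\<Sum>x1\<in>B1. \<Sum>x4\<in>B1. \<Sum>x3\<in>B1. \<Sum>x2\<in>B1. (of_bool ([x1 + x4 = x3 + x2] (mod int p)) :: real))"
    apply (rule sum.cong[OF refl])
    apply (rule sum.cong[OF refl])
    apply (rule sum.swap)
    done
  also have "\<dots> = real (addE p B1)"
    using addE_sum[OF fin, of p] by (simp add: add.commute)
  finally show ?thesis .
qed



lemma L_J:
  fixes B2 :: "int set" and c :: int
  assumes pr: "prime p" and nc: "\<not> int p dvd c" and fin: "finite B2"
  shows "(\<Sum>u\<in>{0..<int p}. (norm (\<Sum>y\<in>B2. ep p (c*u*y))^2)^2) = real p * real (addE p B2)"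
proof -
  have p: "p > 0" using pr prime_gt_0_nat by blast
  have pri: "prime (int p)" using pr by simp
  define M where "M u = (\<Sum>y\<in>B2. ep p (c*u*y))" for u
  have sq: "complex_of_real ((norm (M u)^2)^2)
     = (\<Sum>y1\<in>B2. \<Sum>y2\<in>B2. \<Sum>y3\<in>B2. \<Sum>y4\<in>B2. ep p (u * (c*(y1+y2-y3-y4))))" for u
  proof -
    have "complex_of_real ((norm (M u)^2)^2) = (M u * M u) * (cnj (M u) * cnj (M u))"
      by (subst of_real_power[of "norm (M u)^2" 2], subst complex_norm_square) (simp add: power2_eq_square mult_ac)
    also have "\<dots> = (\<Sum>y1\<in>B2. \<Sum>y2\<in>B2. \<Sum>y3\<in>B2. \<Sum>y4\<in>B2.
        ep p (c*u*y1) * ep p (c*u*y2) * cnj (ep p (c*u*y3)) * cnj (ep p (c*u*y4)))"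
    proof -
      define P where "P = M u * M u"
      define Q where "Q = cnj (M u) * cnj (M u)"
      have hP: "P = (\<Sum>y1\<in>B2. \<Sum>y2\<in>B2. ep p (c*u*y1) * ep p (c*u*y2))"
        by (simp add: P_def M_def sum_product)
      have hQ: "Q = (\<Sum>y3\<in>B2. \<Sum>y4\<in>B2. cnj (ep p (c*u*y3)) * cnj (ep p (c*u*y4)))"
        by (simp add: Q_def M_def sum_product)
      have "P * Q = (\<Sum>y1\<in>B2. \<Sum>y2\<in>B2. (ep p (c*u*y1) * ep p (c*u*y2)) * Q)"
        by (simp only: hP sum_distrib_right)
      also have "\<dots> = (\<Sum>y1\<in>B2. \<Sum>y2\<in>B2. \<Sum>y3\<in>B2. \<Sum>y4\<in>B2.
        (ep p (c*u*y1) * ep p (c*u*y2)) * (cnj (ep p (c*u*y3)) * cnj (ep p (c*u*y4))))"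
        by (simp only: hQ sum_distrib_left)
      finally show ?thesis unfolding P_def Q_def by (simp only: mult.assoc)
    qed
    also have "\<dots> = (\<Sum>y1\<in>B2. \<Sum>y2\<in>B2. \<Sum>y3\<in>B2. \<Sum>y4\<in>B2. ep p (u * (c*(y1+y2-y3-y4))))"
      by (simp only: ep4b)
    finally show ?thesis .
  qed
  have dv: "(int p dvd c*(y1+y2-y3-y4)) = [y1+y2 = y3+y4] (mod int p)" for y1 y2 y3 y4 :: int
  proof -
    have "(int p dvd c*(y1+y2-y3-y4)) = (int p dvd (y1+y2-y3-y4))"
      using nc pri by (simp add: prime_dvd_mult_iff)
    also have "\<dots> = [y1+y2 = y3+y4] (mod int p)"
      by (simp add: cong_iff_dvd_diff algebra_simps)
    finally show ?thesis .
  qed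
  have "complex_of_real (\<Sum>u\<in>{0..<int p}. (norm (M u)^2)^2)
      = (\<Sum>u\<in>{0..<int p}. \<Sum>y1\<in>B2. \<Sum>y2\<in>B2. \<Sum>y3\<in>B2. \<Sum>y4\<in>B2. ep p (u * (c*(y1+y2-y3-y4))))"
    by (simp only: of_real_sum sq)
  also have "\<dots> = (\<Sum>y1\<in>B2. \<Sum>y2\<in>B2. \<Sum>y3\<in>B2. \<Sum>y4\<in>B2. \<Sum>u\<in>{0..<int p}. ep p (u * (c*(y1+y2-y3-y4))))"
    apply (rule trans[OF sum.swap], rule sum.cong[OF refl])
    apply (rule trans[OF sum.swap], rule sum.cong[OF refl])
    apply (rule trans[OF sum.swap], rule sum.cong[OF refl])
    apply (rule sum.swap)
    done
  also have "\<dots> = (\<Sum>y1\<in>B2. \<Sum>y2\<in>B2. \<Sum>y3\<in>B2. \<Sum>y4\<in>B2.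
        complex_of_real (real p * of_bool ([y1+y2 = y3+y4] (mod int p))))"
    by (simp only: ep_orth[OF p] dv) (intro sum.cong refl, simp add: of_bool_def)
  also have "\<dots> = complex_of_real (real p * real (addE p B2))"
    by (simp only: addE_sum[OF fin] of_real_sum sum_distrib_left)
  finally show ?thesis unfolding M_def of_real_eq_iff .
qed



lemma pw8a: "(a::real) \<ge> 0 \<Longrightarrow> (a powr (1/2))^8 = a^4"
proof (cases "a = 0")
  case False
  assume "a \<ge> 0"
  then have "a > 0" using False by simp
  then have "(a powr (1/2))^8 = a powr (real 4)" by (simp add: powr_power)
  then show ?thesis using \<open>a > 0\<close> powr_realpow by simp
qed simp

lemma pw8b: "(a::real) \<ge> 0 \<Longrightarrow> (a powr (1/8))^8 = a"
proof (cases "a = 0")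
  case False
  assume "a \<ge> 0"
  then have "a > 0" using False by simp
  then have "(a powr (1/8))^8 = a powr (real 1)" by (simp add: powr_power)
  then show ?thesis using \<open>a > 0\<close> by simp
qed simp

lemma final_arith:
  fixes X n1 n2 E1 E2 P :: real
  assumes "0 \<le> X" "0 \<le> n1" "0 \<le> n2" "0 \<le> E1" "0 \<le> E2" "0 \<le> P"
    and "X^8 \<le> n1^4 * n2^4 * E1 * E2 * P"
  shows "X \<le> n1 powr (1/2) * E1 powr (1/8) * n2 powr (1/2) * E2 powr (1/8) * P powr (1/8)"
proof (rule power_le_imp_le_base[where n=7])
  show "0 \<le> n1 powr (1/2) * E1 powr (1/8) * n2 powr (1/2) * E2 powr (1/8) * P powr (1/8)"
    by simp
  have "(n1 powr (1/2) * E1 powr (1/8) * n2 powr (1/2) * E2 powr (1/8) * P powr (1/8)) ^ Suc 7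
      = (n1 powr (1/2))^8 * (E1 powr (1/8))^8 * (n2 powr (1/2))^8 * (E2 powr (1/8))^8 * (P powr (1/8))^8"
    by (simp only: power_mult_distrib) simp
  also have "\<dots> = n1^4 * E1 * n2^4 * E2 * P"
    using assms by (simp add: pw8a pw8b)
  finally show "X ^ Suc 7 \<le> (n1 powr (1/2) * E1 powr (1/8) * n2 powr (1/2) * E2 powr (1/8) * P powr (1/8)) ^ Suc 7"
    using assms(7) by (simp add: mult_ac)
qed



lemma main_odd:
  fixes p :: nat and \<theta> :: int and B1 B2 :: "int set"
  assumes pr: "prime p" and p2: "p \<noteq> 2" and nt: "\<not> int p dvd \<theta>"
    and f1: "finite B1" and f2: "finite B2"
  shows "norm (\<Sum>b1\<in>B1. \<Sum>b2\<in>B2. ep p (\<theta> * (b1 - b2)^2))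
         \<le> real (card B1) powr (1/2) * real (addE p B1) powr (1/8)
           * real (card B2) powr (1/2) * real (addE p B2) powr (1/8) * real p powr (1/8)"
proof -
  have p: "p > 0" using pr prime_gt_0_nat by blast
  have pri: "prime (int p)" using pr by simp
  define c where "c = -2 * \<theta>"
  have nc: "\<not> int p dvd c"
  proof
    assume "int p dvd c"
    then have "int p dvd 2 * \<theta>" unfolding c_def by simp
    then have "int p dvd 2" using nt pri by (simp add: prime_dvd_mult_iff)
    then have "p dvd 2" by presburger
    then have "p \<le> 2" by (simp add: dvd_imp_le)
    moreover have "p \<ge> 2" using pr prime_ge_2_nat by blast
    ultimately show False using p2 by simp
  qed
  define g where "g y = ep p (\<theta> * y^2)" for y
  define G where "G x = (\<Sum>y\<in>B2. g y * ep p (c*x*y))" for x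
  define K where "K y y' = (\<Sum>x\<in>B1. ep p (c*x*y) * cnj (ep p (c*x*y')))" for y y'
  define M where "M u = (\<Sum>y\<in>B2. ep p (c*u*y))" for u
  define R2 where "R2 u = norm (M u)^2" for u
  define r1 where "r1 u = (\<Sum>x\<in>B1. \<Sum>x'\<in>B1. (of_bool ((x-x') mod int p = u) :: real))" for u
  define S where "S = (\<Sum>b1\<in>B1. \<Sum>b2\<in>B2. ep p (\<theta> * (b1 - b2)^2))"
  define A where "A = (\<Sum>x\<in>B1. norm (G x))"
  define Q where "Q = (\<Sum>x\<in>B1. norm (G x)^2)"
  define W where "W = (\<Sum>y\<in>B2. \<Sum>y'\<in>B2. norm (K y y'))"
  define V where "V = (\<Sum>y\<in>B2. \<Sum>y'\<in>B2. norm (K y y')^2)"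
  define n1 where "n1 = real (card B1)"
  define n2 where "n2 = real (card B2)"
  define E1 where "E1 = real (addE p B1)"
  define E2 where "E2 = real (addE p B2)"
  have S_eq: "S = (\<Sum>x\<in>B1. ep p (\<theta> * x^2) * G x)"
    unfolding S_def G_def sum_distrib_left
  proof (intro sum.cong refl)
    fix x y
    have "\<theta> * (x - y)^2 = \<theta> * x^2 + (\<theta> * y^2 + c*x*y)"
      by (simp add: c_def power2_eq_square algebra_simps)
    then show "ep p (\<theta> * (x - y)^2) = ep p (\<theta> * x^2) * (g y * ep p (c*x*y))"
      by (simp add: ep_add g_def)
  qed
  have X_A: "norm S \<le> A"
  proof -
    have "norm S \<le> (\<Sum>x\<in>B1. norm (ep p (\<theta> * x^2) * G x))"
      unfolding S_eq by (rule norm_sum)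
    also have "\<dots> = A" by (simp add: A_def norm_mult)
    finally show ?thesis .
  qed
  have A_Q: "A^2 \<le> Q * n1"
    unfolding A_def Q_def n1_def by (rule sum_squared_le_sum_of_squares)
  have Q_W: "Q \<le> W"
    unfolding Q_def W_def G_def K_def by (rule L_D) (simp add: g_def)
  have W_V: "W^2 \<le> n2^2 * V"
  proof -
    have "W^2 \<le> (\<Sum>y\<in>B2. (\<Sum>y'\<in>B2. norm (K y y'))^2) * n2"
      unfolding W_def n2_def by (rule sum_squared_le_sum_of_squares)
    also have "\<dots> \<le> (\<Sum>y\<in>B2. (\<Sum>y'\<in>B2. norm (K y y')^2) * n2) * n2"
      unfolding n2_def
      by (intro mult_right_mono sum_mono sum_squared_le_sum_of_squares) auto
    also have "\<dots> = n2^2 * V"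
      by (simp add: V_def power2_eq_square sum_distrib_right mult_ac flip: sum_distrib_left)
    finally show ?thesis .
  qed
  have V_eq: "V = (\<Sum>x\<in>B1. \<Sum>x'\<in>B1. R2 (x-x'))"
  proof -
    have h: "complex_of_real V = (\<Sum>x\<in>B1. \<Sum>x'\<in>B1. complex_of_real (R2 (x-x')))"
      unfolding V_def K_def R2_def M_def by (rule L_F)
    have "complex_of_real V = complex_of_real (\<Sum>x\<in>B1. \<Sum>x'\<in>B1. R2 (x-x'))"
      unfolding h by (simp only: of_real_sum)
    then show ?thesis by (simp only: of_real_eq_iff)
  qed
  have per: "R2 (u mod int p) = R2 u" for u
  proof -
    have "M (u mod int p) = M u"
      unfolding M_def
    proof (intro sum.cong refl ep_cong[OF p])
      fix y show "[c * (u mod int p) * y = c * u * y] (mod int p)"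
        by (intro cong_mult cong_refl) (simp add: cong_def)
    qed
    then show ?thesis by (simp add: R2_def)
  qed
  have V_r: "V = (\<Sum>u\<in>{0..<int p}. r1 u * R2 u)"
    unfolding V_eq r1_def by (rule L_G[where R=R2, OF p per])
  have V2: "V^2 \<le> E1 * (real p * E2)"
  proof -
    have "V^2 \<le> (\<Sum>u\<in>{0..<int p}. (r1 u)^2) * (\<Sum>u\<in>{0..<int p}. (R2 u)^2)"
      unfolding V_r by (rule Cauchy_Schwarz_ineq_sum)
    also have "(\<Sum>u\<in>{0..<int p}. (r1 u)^2) = E1"
      unfolding r1_def E1_def using L_I[OF p] L_I2[OF p f1] by simp
    also have "(\<Sum>u\<in>{0..<int p}. (R2 u)^2) = real p * E2"
      unfolding R2_def M_def E2_def by (rule L_J[OF pr nc f2])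
    finally show ?thesis .
  qed
  have nn: "0 \<le> A" "0 \<le> Q" "0 \<le> W" "0 \<le> V" "0 \<le> n1" "0 \<le> n2"
    by (auto simp: A_def Q_def W_def V_def n1_def n2_def intro!: sum_nonneg)
  have "(norm S)^8 \<le> n1^4 * n2^4 * E1 * E2 * real p"
  proof -
    have "(norm S)^8 \<le> A^8" using X_A by (simp add: power_mono)
    also have "\<dots> = (A^2)^4" by (simp flip: power_mult)
    also have "\<dots> \<le> (Q * n1)^4" using A_Q by (intro power_mono) auto
    also have "\<dots> \<le> (W * n1)^4" using Q_W nn by (intro power_mono mult_right_mono) auto
    also have "\<dots> = (W^2)^2 * n1^4" by (simp add: power_mult_distrib flip: power_mult)
    also have "\<dots> \<le> (n2^2 * V)^2 * n1^4" using W_V nn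
      by (intro mult_right_mono power_mono) auto
    also have "\<dots> = V^2 * n2^4 * n1^4" by (simp add: power_mult_distrib flip: power_mult)
    also have "\<dots> \<le> (E1 * (real p * E2)) * n2^4 * n1^4" using V2 nn
      by (intro mult_right_mono) auto
    finally show ?thesis by (simp add: mult_ac)
  qed
  then show ?thesis
    unfolding S_def[symmetric] n1_def[symmetric] n2_def[symmetric] E1_def[symmetric] E2_def[symmetric]
    by (rule final_arith[rotated -1]) (auto simp: n1_def n2_def E1_def E2_def)
qed



lemma ep2: assumes "\<not> 2 dvd \<theta>" shows "ep 2 \<theta> = -1"
proof -
  have "[\<theta> = 1] (mod int 2)" using assms by (simp add: cong_def) presburger
  then have "ep 2 \<theta> = ep 2 1" by (intro ep_cong) auto
  also have "\<dots> = -1" by (simp add: ep_cis)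
  finally show ?thesis .
qed

lemma inner0: assumes "\<not> 2 dvd \<theta>" "b \<in> {0, 1::int}"
  shows "(\<Sum>a\<in>{0,1::int}. ep 2 (\<theta> * (a - b)^2)) = 0"
     "(\<Sum>a\<in>{0,1::int}. ep 2 (\<theta> * (b - a)^2)) = 0"
  using assms ep2[OF assms(1)] by (auto simp: ep_def)

lemma addE_pos: assumes "finite B" "b \<in> B" shows "addE p B \<ge> 1"
proof -
  have "(b, b, b, b) \<in> {(b1, b2, b3, b4). b1 \<in> B \<and> b2 \<in> B \<and> b3 \<in> B \<and> b4 \<in> B \<and>
                     [b1 + b2 = b3 + b4] (mod int p)}" using assms by auto
  moreover have "finite {(b1, b2, b3, b4). b1 \<in> B \<and> b2 \<in> B \<and> b3 \<in> B \<and> b4 \<in> B \<and>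
                     [b1 + b2 = b3 + b4] (mod int p)}"
    by (rule finite_subset[where B="B \<times> B \<times> B \<times> B"]) (auto simp: assms)
  ultimately show ?thesis unfolding addE_def
    by (metis (no_types, lifting) One_nat_def Suc_leI card_gt_0_iff empty_iff)
qed

lemma main_two:
  fixes \<theta> :: int and B1 B2 :: "int set"
  assumes nt: "\<not> int 2 dvd \<theta>"
    and s1: "B1 \<subseteq> {0..<int 2}" and s2: "B2 \<subseteq> {0..<int 2}"
  shows "norm (\<Sum>b1\<in>B1. \<Sum>b2\<in>B2. ep 2 (\<theta> * (b1 - b2)^2))
         \<le> real (card B1) powr (1/2) * real (addE 2 B1) powr (1/8)
           * real (card B2) powr (1/2) * real (addE 2 B2) powr (1/8) * real 2 powr (1/8)"
proof -
  have nt': "\<not> 2 dvd \<theta>" using nt by simp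
  have st: "{0..<int 2} = {0, 1}" by auto
  have f1: "finite B1" and f2: "finite B2" using s1 s2 finite_subset by auto
  show ?thesis
  proof (cases "B1 = {0,1} \<or> B2 = {0,1}")
    case True
    have "(\<Sum>b1\<in>B1. \<Sum>b2\<in>B2. ep 2 (\<theta> * (b1 - b2)^2)) = 0"
    proof (cases "B1 = {0,1}")
      case True
      have "(\<Sum>b1\<in>B1. \<Sum>b2\<in>B2. ep 2 (\<theta> * (b1 - b2)^2)) = (\<Sum>b2\<in>B2. \<Sum>b1\<in>B1. ep 2 (\<theta> * (b1 - b2)^2))"
        by (rule sum.swap)
      also have "\<dots> = 0" using True s2 st inner0(1)[OF nt'] by (intro sum.neutral) auto
      finally show ?thesis .
    next
      case False
      then have "B2 = {0,1}" using \<open>B1 = {0,1} \<or> B2 = {0,1}\<close> by simp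
      then show ?thesis using s1 st inner0(2)[OF nt'] by (intro sum.neutral) auto
    qed
    then show ?thesis by simp
  next
    case False
    have c1: "card B1 \<le> 1"
    proof -
      have "B1 \<subseteq> {0,1}" using s1 st by simp
      then have "B1 = {} \<or> B1 = {0} \<or> B1 = {1}" using False by blast
      then show ?thesis by auto
    qed
    have c2: "card B2 \<le> 1"
    proof -
      have "B2 \<subseteq> {0,1}" using s2 st by simp
      then have "B2 = {} \<or> B2 = {0} \<or> B2 = {1}" using False by blast
      then show ?thesis by auto
    qed
    show ?thesis
    proof (cases "B1 = {} \<or> B2 = {}")
      case True then show ?thesis by auto
    next
      case False
      then have n1: "card B1 = 1" and n2: "card B2 = 1" using c1 c2 f1 f2
        by (auto simp: le_Suc_eq card_eq_0_iff)
      obtain b1 where "b1 \<in> B1" using False by auto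
      then have e1: "real (addE 2 B1) \<ge> 1" using addE_pos[OF f1] by simp
      obtain b2 where "b2 \<in> B2" using False by auto
      then have e2: "real (addE 2 B2) \<ge> 1" using addE_pos[OF f2] by simp
      have "norm (\<Sum>b1\<in>B1. \<Sum>b2\<in>B2. ep 2 (\<theta> * (b1 - b2)^2)) \<le> (\<Sum>b1\<in>B1. \<Sum>b2\<in>B2. norm (ep 2 (\<theta> * (b1 - b2)^2)))"
        by (rule order_trans[OF norm_sum sum_mono[OF norm_sum]])
      also have "\<dots> = 1" using n1 n2 by simp
      also have "1 \<le> real (addE 2 B1) powr (1/8) * real (addE 2 B2) powr (1/8) * real 2 powr (1/8)"
      proof -
        have "1 \<le> real (addE 2 B1) powr (1/8)" using e1 by (simp add: ge_one_powr_ge_zero)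
        moreover have "1 \<le> real (addE 2 B2) powr (1/8)" using e2 by (simp add: ge_one_powr_ge_zero)
        moreover have "1 \<le> real 2 powr (1/8)" by (simp add: ge_one_powr_ge_zero)
        ultimately show ?thesis
          using mult_mono[of 1 "real (addE 2 B1) powr (1/8)" 1 "real (addE 2 B2) powr (1/8)"]
            mult_mono[of 1 "real (addE 2 B1) powr (1/8) * real (addE 2 B2) powr (1/8)" 1 "real 2 powr (1/8)"]
          by simp
      qed
      finally show ?thesis using n1 n2 by simp
    qed
  qed
qed


theorem lemma9:
  fixes p :: nat and \<theta> :: int and B1 B2 :: "int set"
  assumes "prime p"
    and "\<not> int p dvd \<theta>"
    and "B1 \<subseteq> {0..<int p}" and "B2 \<subseteq> {0..<int p}"
  shows "norm (\<Sum>b1\<in>B1. \<Sum>b2\<in>B2. ep p (\<theta> * (b1 - b2)^2))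
         \<le> real (card B1) powr (1/2) * real (addE p B1) powr (1/8)
           * real (card B2) powr (1/2) * real (addE p B2) powr (1/8) * real p powr (1/8)"
proof (cases "p = 2")
  case True
  then show ?thesis using main_two assms by simp
next
  case False
  have "finite B1" "finite B2" using assms(3,4) finite_subset by auto
  then show ?thesis using main_odd[OF assms(1) False assms(2)] by simp
qed

end
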